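(* Let $M := \langle X \mid R\rangle$ where $R = \{(e,f)\}$ for some $e,f \in \langle X\rangle$, and let $d := ||e|-|f|| \in \mathbb{N}$. (1) If $d = 0$, then $M$ is half-factorial. (2) If $d \neq 0$, then $\Delta(M) = \{d\}$, and $\mathsf{L}_M(a)$ is an arithmetic progression with difference $d$ for all $a \in \langle X\rangle$.
   Context: For a set $X$, $\langle X\rangle$ is the free monoid on $X$ (identity $1$); $M=\langle X\mid R\rangle$ is the monoid presented by generators $X$ and relations $R\subseteq\langle X\rangle\times\langle X\rangle$. For $a,b\in\langle X\rangle$, $a=_M b$ means they have equal images in $M$; $|a|$ is word length. $\mathsf{L}_M(a) := \{|b| : b\in\langle X\rangle,\ b=_M a\}$ and $\mathcal{L}(M) := \{\mathsf{L}_M(a) : a\in\langle X\rangle\}$. $M$ is half-factorial if $\mathsf{L}_M(a) = \{|a|\}$ for all $a$. For $L\subseteq\mathbb{N}$, $d\in\mathbb{N}^+$ is a distance of $L$ if $[k,k+d]\cap L = \{k,k+d\}$ for some $k\in L$ (where $[n,m]$ is the set of integers between $n$ and $m$); $\Delta(L)$ is the set of distances of $L$, and $\Delta(M) := \bigcup_{L\in\mathcal{L}(M)}\Delta(L)$. (A singleton counts as an arithmetic progression with any difference.) *)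

theory Defs
  imports Main
begin

text \<open>Free monoid on the generators of type 'a: lists; identity = [], product = append.
  One-step rewriting with the relation set R: u@e@v -> u@f@v for (e,f) in R.\<close>

inductive rstep :: "('a list \<times> 'a list) set \<Rightarrow> 'a list \<Rightarrow> 'a list \<Rightarrow> bool"
  for R where
  "(e, f) \<in> R \<Longrightarrow> rstep R (u @ e @ v) (u @ f @ v)"

text \<open>Equality in the presented monoid: the congruence generated by R
  (reflexive-symmetric-transitive closure of one-step rewriting).\<close>
definition pres_eq :: "('a list \<times> 'a list) set \<Rightarrow> 'a list \<Rightarrow> 'a list \<Rightarrow> bool" where
  "pres_eq R a b \<longleftrightarrow> (\<lambda>x y. rstep R x y \<or> rstep R y x)\<^sup>*\<^sup>* a b"

definition lengths :: "('a list \<times> 'a list) set \<Rightarrow> 'a list \<Rightarrow> nat set" where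
  "lengths R a = {length b | b. pres_eq R b a}"

definition length_sets :: "('a list \<times> 'a list) set \<Rightarrow> nat set set" where
  "length_sets R = {lengths R a | a. True}"

definition half_factorial :: "('a list \<times> 'a list) set \<Rightarrow> bool" where
  "half_factorial R \<longleftrightarrow> (\<forall>a. lengths R a = {length a})"

definition distances :: "nat set \<Rightarrow> nat set" where
  "distances L = {d. d > 0 \<and> (\<exists>k\<in>L. {k..k+d} \<inter> L = {k, k+d})}"

definition monoid_distances :: "('a list \<times> 'a list) set \<Rightarrow> nat set" where
  "monoid_distances R = (\<Union>L\<in>length_sets R. distances L)"

definition arith_prog :: "nat set \<Rightarrow> nat \<Rightarrow> bool" where
  "arith_prog L d \<longleftrightarrow> (\<exists>k I. I \<noteq> {} \<and> (\<forall>i j. i \<in> I \<longrightarrow> j \<le> i \<longrightarrow> j \<in> I)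
      \<and> L = {k + i * d | i. i \<in> I})"

end

theory Submission
  imports Defs
begin

definition stp :: "'a list \<Rightarrow> 'a list \<Rightarrow> 'a list \<Rightarrow> 'a list \<Rightarrow> bool" where
  "stp e f = (\<lambda>x y. rstep {(e,f)} x y \<or> rstep {(e,f)} y x)"

lemma pres_eq_stp: "pres_eq {(e,f)} x y \<longleftrightarrow> (stp e f)\<^sup>*\<^sup>* x y"
  unfolding pres_eq_def stp_def by simp

lemma step_len:
  assumes "stp e f x y"
  shows "int (length y) = int (length x) + \<bar>int (length e) - int (length f)\<bar>
       \<or> int (length y) = int (length x) - \<bar>int (length e) - int (length f)\<bar>"
  using assms unfolding stp_def
  by (auto elim!: rstep.cases simp: abs_if)

lemma stp_cong:
  assumes "(stp e f)\<^sup>*\<^sup>* a b"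
  shows "\<exists>j::int. int (length b) = int (length a) + j * \<bar>int (length e) - int (length f)\<bar>"
  using assms
proof (induction rule: rtranclp_induct)
  case base
  then show ?case by (intro exI[of _ 0]) simp
next
  case (step y z)
  then obtain j where j: "int (length y) = int (length a) + j * \<bar>int (length e) - int (length f)\<bar>" by blast
  from step_len[OF step(2)] show ?case
  proof
    assume "int (length z) = int (length y) + \<bar>int (length e) - int (length f)\<bar>"
    then show ?case using j by (intro exI[of _ "j+1"]) (simp add: algebra_simps)
  next
    assume "int (length z) = int (length y) - \<bar>int (length e) - int (length f)\<bar>"
    then show ?case using j by (intro exI[of _ "j-1"]) (simp add: algebra_simps)
  qed
qed

lemma stp_sym:
  assumes "(stp e f)\<^sup>*\<^sup>* a b"
  shows "(stp e f)\<^sup>*\<^sup>* b a"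
  using assms
proof (induction rule: rtranclp_induct)
  case base
  then show ?case by simp
next
  case (step y z)
  have "stp e f z y" using step(2) unfolding stp_def by blast
  then show ?case using step(3) by (rule converse_rtranclp_into_rtranclp)
qed

lemma int_mult_cases:
  fixes j D :: int
  assumes "0 < D" "j * D < n * D" "n * D \<le> j * D + D"
  shows "n = j + 1"
proof -
  have "j < n" using assms(1,2) by (simp add: mult_less_cancel_right)
  moreover have "n * D \<le> (j+1) * D" using assms(3) by (simp add: algebra_simps)
  then have "n \<le> j + 1" using assms(1) by (simp add: mult_le_cancel_right)
  ultimately show ?thesis by simp
qed

lemma stp_ivt:
  assumes "(stp e f)\<^sup>*\<^sup>* a b"
    and "0 < \<bar>int (length e) - int (length f)\<bar>" and "0 \<le> n"
    and "int (length a) + n * \<bar>int (length e) - int (length f)\<bar> \<le> int (length b)"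
  shows "\<exists>c. (stp e f)\<^sup>*\<^sup>* a c \<and> int (length c) = int (length a) + n * \<bar>int (length e) - int (length f)\<bar>"
  using assms
proof (induction rule: rtranclp_induct)
  case base
  then have "n * \<bar>int (length e) - int (length f)\<bar> = 0"
    by (smt (verit) mult_nonneg_nonneg)
  then show ?case by auto
next
  case (step y z)
  define D where "D = \<bar>int (length e) - int (length f)\<bar>"
  show ?case
  proof (cases "int (length a) + n * D \<le> int (length y)")
    case True
    then show ?thesis using step unfolding D_def by blast
  next
    case False
    obtain j where j: "int (length y) = int (length a) + j * D"
      using stp_cong[OF step(1)] unfolding D_def by blast
    have z: "int (length z) = int (length y) + D"
      using step_len[OF step(2)] False step(6) unfolding D_def by auto
    have "n = j + 1"
      by (rule int_mult_cases[of D]) (use False z j step(4,6) D_def in auto)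
    then have "int (length z) = int (length a) + n * D"
      using z j by (simp add: algebra_simps)
    then show ?thesis using step(1,2) unfolding D_def
      by (meson rtranclp.rtrancl_into_rtrancl)
  qed
qed

theorem proposition4p1:
  fixes e f :: "'a list"
  defines "d \<equiv> nat \<bar>int (length e) - int (length f)\<bar>"
  shows "(d = 0 \<longrightarrow> half_factorial {(e, f)})
       \<and> (d \<noteq> 0 \<longrightarrow> monoid_distances {(e, f)} = {d}
                   \<and> (\<forall>a. arith_prog (lengths {(e, f)} a) d))"
proof -
  define D where "D = \<bar>int (length e) - int (length f)\<bar>"
  define S where "S = stp e f"
  have dD: "int d = D" unfolding d_def D_def by simp
  have len: "lengths {(e, f)} a = {length b | b. S\<^sup>*\<^sup>* b a}" for a
    unfolding lengths_def pres_eq_stp S_def by simp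
  have cong: "S\<^sup>*\<^sup>* x y \<Longrightarrow> \<exists>j. int (length y) = int (length x) + j * D" for x y
    using stp_cong unfolding S_def D_def by blast
  have sym: "S\<^sup>*\<^sup>* x y \<Longrightarrow> S\<^sup>*\<^sup>* y x" for x y
    using stp_sym unfolding S_def by blast
  have tr: "S\<^sup>*\<^sup>* x y \<Longrightarrow> S\<^sup>*\<^sup>* y z \<Longrightarrow> S\<^sup>*\<^sup>* x z" for x y z
    by (rule rtranclp_trans)
  have P1: "d = 0 \<longrightarrow> half_factorial {(e, f)}"
  proof
    assume "d = 0"
    then have D0: "D = 0" using dD by simp
    show "half_factorial {(e, f)}"
      unfolding half_factorial_def
    proof
      fix a
      show "lengths {(e, f)} a = {length a}"
        unfolding len
      proof (safe)
        fix b assume "S\<^sup>*\<^sup>* b a"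
        then obtain j where "int (length a) = int (length b) + j * D" using cong by blast
        then show "length b = length a" using D0 by simp
      qed auto
    qed
  qed
  have P2: "d \<noteq> 0 \<longrightarrow> monoid_distances {(e, f)} = {d}
                   \<and> (\<forall>a. arith_prog (lengths {(e, f)} a) d)"
  proof
    assume "d \<noteq> 0"
    then have Dpos: "0 < D" using dD by simp
    have ivt: "S\<^sup>*\<^sup>* x y \<Longrightarrow> 0 \<le> n \<Longrightarrow> int (length x) + n * D \<le> int (length y)
       \<Longrightarrow> \<exists>c. S\<^sup>*\<^sup>* x c \<and> int (length c) = int (length x) + n * D" for x y n
      using stp_ivt[of e f x y n] Dpos unfolding S_def D_def by blast
    have conv: "k \<in> lengths {(e, f)} a \<Longrightarrow> m \<in> lengths {(e, f)} a \<Longrightarrow> 0 \<le> n \<Longrightarrow>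
        int k + n * D \<le> int m \<Longrightarrow> nat (int k + n * D) \<in> lengths {(e, f)} a" for k m n a
    proof -
      assume k: "k \<in> lengths {(e, f)} a" and m: "m \<in> lengths {(e, f)} a" and n: "0 \<le> n"
        and le: "int k + n * D \<le> int m"
      obtain b where b: "k = length b" "S\<^sup>*\<^sup>* b a" using k unfolding len by blast
      obtain c where c: "m = length c" "S\<^sup>*\<^sup>* c a" using m unfolding len by blast
      have "S\<^sup>*\<^sup>* b c" using b c sym tr by blast
      then obtain c' where c': "S\<^sup>*\<^sup>* b c'" "int (length c') = int (length b) + n * D"
        using ivt[of b c n] n le b c by auto
      have "S\<^sup>*\<^sup>* c' a" using c' b sym tr by blast
      moreover have "nat (int k + n * D) = length c'" using c' b by simp
      ultimately show ?thesis unfolding len by blast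
    qed
    have congL: "k \<in> lengths {(e, f)} a \<Longrightarrow> m \<in> lengths {(e, f)} a \<Longrightarrow>
        \<exists>j. int m = int k + j * D" for k m a
    proof -
      assume k: "k \<in> lengths {(e, f)} a" and m: "m \<in> lengths {(e, f)} a"
      obtain b where b: "k = length b" "S\<^sup>*\<^sup>* b a" using k unfolding len by blast
      obtain c where c: "m = length c" "S\<^sup>*\<^sup>* c a" using m unfolding len by blast
      have "S\<^sup>*\<^sup>* b c" using b c sym tr by blast
      then show ?thesis using cong b c by blast
    qed
    have AP: "arith_prog (lengths {(e, f)} a) d" for a
    proof -
      let ?L = "lengths {(e, f)} a"
      have aL: "length a \<in> ?L" unfolding len by blast
      define k where "k = (LEAST x. x \<in> ?L)"
      have kL: "k \<in> ?L" unfolding k_def using aL by (rule LeastI)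
      have kmin: "x \<in> ?L \<Longrightarrow> k \<le> x" for x unfolding k_def by (rule Least_le)
      define I where "I = {i. k + i * d \<in> ?L}"
      have "0 \<in> I" using kL unfolding I_def by simp
      moreover have "\<forall>i j. i \<in> I \<longrightarrow> j \<le> i \<longrightarrow> j \<in> I"
      proof (intro allI impI)
        fix i j assume i: "i \<in> I" and ji: "j \<le> i"
        have "int k + int j * D \<le> int (k + i * d)" using ji Dpos dD
          by (simp add: mult_right_mono)
        then have "nat (int k + int j * D) \<in> ?L"
          using conv[OF kL _ _] i unfolding I_def by simp
        moreover have "nat (int k + int j * D) = k + j * d" proof -
          have "int k + int j * D = int (k + j * d)" using dD by simp
          then show ?thesis by (metis nat_int)
        qed
        ultimately show "j \<in> I" unfolding I_def by simp
      qed
      moreover have "?L = {k + i * d | i. i \<in> I}"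
      proof (safe)
        fix x assume x: "x \<in> ?L"
        obtain j where j: "int x = int k + j * D" using congL[OF kL x] by blast
        have "k \<le> x" using kmin x .
        then have "0 \<le> j * D" using j by simp
        then have j0: "0 \<le> j" using Dpos by (simp add: zero_le_mult_iff)
        have "x = k + nat j * d" using j j0 dD
          by (metis nat_int of_nat_add of_nat_mult int_nat_eq)
        then show "\<exists>i. x = k + i * d \<and> i \<in> I" using x unfolding I_def by blast
      next
        fix i assume "i \<in> I" then show "k + i * d \<in> ?L" unfolding I_def by simp
      qed
      ultimately show ?thesis unfolding arith_prog_def by blast
    qed
    have MD: "monoid_distances {(e, f)} = {d}"
    proof
      show "monoid_distances {(e, f)} \<subseteq> {d}"
      proof
        fix d' assume "d' \<in> monoid_distances {(e, f)}"
        then obtain a where "d' \<in> distances (lengths {(e, f)} a)"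
          unfolding monoid_distances_def length_sets_def by blast
        then obtain k where d'0: "d' > 0" and kL: "k \<in> lengths {(e, f)} a"
          and eq: "{k..k+d'} \<inter> lengths {(e, f)} a = {k, k+d'}"
          unfolding distances_def by blast
        have k2: "k + d' \<in> lengths {(e, f)} a" using eq by blast
        obtain j where j: "int (k + d') = int k + j * D" using congL[OF kL k2] by blast
        have "0 < j * D" using j d'0 by simp
        then have jpos: "0 < j" using Dpos by (simp add: zero_less_mult_iff)
        show "d' \<in> {d}"
        proof (rule ccontr)
          assume "d' \<notin> {d}"
          then have "j \<noteq> 1" using j dD by auto
          then have "2 \<le> j" using jpos by simp
          then have "2 * D \<le> j * D" using Dpos by (simp add: mult_right_mono)
          then have "int k + 1 * D \<le> int (k + d')" using j Dpos by simp
          then have "nat (int k + 1 * D) \<in> lengths {(e, f)} a"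
            using conv[OF kL k2, of 1] by simp
          moreover have "nat (int k + 1 * D) = k + d" using dD by simp
          ultimately have "k + d \<in> {k..k+d'} \<inter> lengths {(e, f)} a"
            using \<open>2 * D \<le> j * D\<close> j dD by auto
          then have "k + d \<in> {k, k+d'}" using eq by simp
          then show False using \<open>d \<noteq> 0\<close> \<open>d' \<notin> {d}\<close> by auto
        qed
      qed
    next
      let ?L = "lengths {(e, f)} e"
      have eL: "length e \<in> ?L" unfolding len by blast
      have "rstep {(e, f)} ([] @ e @ []) ([] @ f @ [])" by (rule rstep.intros) simp
      then have "S e f" unfolding S_def stp_def by simp
      then have "S\<^sup>*\<^sup>* e f" by simp
      then have "S\<^sup>*\<^sup>* f e" by (rule sym)
      then have fL: "length f \<in> ?L" unfolding len by blast
      define k where "k = min (length e) (length f)"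
      have kL: "k \<in> ?L" using eL fL unfolding k_def by (simp add: min_def)
      have "k + d = max (length e) (length f)" unfolding k_def d_def by auto
      then have kdL: "k + d \<in> ?L" using eL fL by (simp add: max_def)
      have "{k..k+d} \<inter> ?L = {k, k+d}"
      proof
        show "{k, k+d} \<subseteq> {k..k+d} \<inter> ?L" using kL kdL by auto
      next
        show "{k..k+d} \<inter> ?L \<subseteq> {k, k+d}"
        proof
        fix x assume xx: "x \<in> {k..k+d} \<inter> ?L"
        then have x: "x \<in> ?L" and x1: "k \<le> x" and x2: "x \<le> k + d" by auto
        show "x \<in> {k, k+d}"
        proof (cases "x = k")
        case True then show ?thesis by simp
        next
        case False
        obtain j where j: "int x = int k + j * D" using congL[OF kL x] by blast
        have "0 \<le> j * D" "j * D \<le> 1 * D" using j x1 x2 dD by auto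
        then have "0 \<le> j" "j \<le> 1" using Dpos by (auto simp: zero_le_mult_iff mult_le_cancel_right)
        then have "j = 0 \<or> j = 1" by auto
        then have "x = k + d" using j False dD by (metis add.commute mult_1 mult_zero_left add_0 of_nat_add of_nat_eq_iff)
        then show ?thesis by simp
        qed
        qed
      qed
      then have "d \<in> distances ?L" unfolding distances_def using kL \<open>d \<noteq> 0\<close> by blast
      then show "{d} \<subseteq> monoid_distances {(e, f)}"
        unfolding monoid_distances_def length_sets_def by blast
    qed
    show "monoid_distances {(e, f)} = {d} \<and> (\<forall>a. arith_prog (lengths {(e, f)} a) d)"
      using MD AP by blast
  qed
  show ?thesis using P1 P2 by blast
qed

end
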